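(* Let $\mathscr Q_n$ be a non-singular quadric in $\mathrm{PG}(n,2)$ of projective index $g\geq1$, let $\Gamma$ be its point-graph, and for $0\le s<g$ let $\Gamma_s$ be the graph constructed from an $s$-dimensional subspace $\alpha_s$ contained in $\mathscr Q_n$ as described below. Then $\Gamma_s$ is isomorphic to $\Gamma$ if and only if $s=0$.
   Context: A non-singular quadric $\mathscr Q_n$ in $\mathrm{PG}(n,2)$ is the point set of a non-degenerate quadric; its projective index $g$ is the largest dimension of a projective subspace contained in $\mathscr Q_n$. The point-graph $\Gamma$ has vertex set the points of $\mathscr Q_n$, two distinct points adjacent iff the line joining them is contained in $\mathscr Q_n$. For $0\le s<g$ and an $s$-dimensional subspace $\alpha_s\subseteq\mathscr Q_n$: a point $X$ of $\mathscr Q_n$ has type (i) if $X\in\alpha_s$; type (ii) if $X\notin\alpha_s$ and $\langle\alpha_s,X\rangle\subseteq\mathscr Q_n$; type (iii) otherwise. Let $\mathcal X_s$ be the type (ii) points and $\mathcal Y_s$ the points of type (i) or (iii). The graph $\Gamma_s$ has the same vertex set as $\Gamma$ and the same edges, except that for each vertex $R\in\mathcal Y_s$ having exactly $\frac12|\mathcal X_s|$ neighbours in $\mathcal X_s$ (in $\Gamma$), those edges are deleted and $R$ is joined instead to the other $\frac12|\mathcal X_s|$ vertices of $\mathcal X_s$. *)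

theory Defs
  imports Main "HOL-Library.Z2"
begin

(* Vectors of GF(2)^{n+1}: functions nat => bit supported on {0..n}.
   Over GF(2) each point of PG(n,2) has exactly one nonzero representative. *)
definition vecs :: "nat \<Rightarrow> (nat \<Rightarrow> bit) set" where
  "vecs n = {x. \<forall>i>n. x i = 0}"

definition pg_points :: "nat \<Rightarrow> (nat \<Rightarrow> bit) set" where
  "pg_points n = {x \<in> vecs n. x \<noteq> (\<lambda>_. 0)}"

definition vadd :: "(nat \<Rightarrow> bit) \<Rightarrow> (nat \<Rightarrow> bit) \<Rightarrow> (nat \<Rightarrow> bit)" where
  "vadd x y = (\<lambda>i. x i + y i)"

definition qform :: "nat \<Rightarrow> (nat \<Rightarrow> nat \<Rightarrow> bit) \<Rightarrow> (nat \<Rightarrow> bit) \<Rightarrow> bit" where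
  "qform n a x = (\<Sum>i\<in>{0..n}. \<Sum>j\<in>{i..n}. a i j * x i * x j)"

definition bform :: "nat \<Rightarrow> (nat \<Rightarrow> nat \<Rightarrow> bit) \<Rightarrow> (nat \<Rightarrow> bit) \<Rightarrow> (nat \<Rightarrow> bit) \<Rightarrow> bit" where
  "bform n a x y = qform n a (vadd x y) - qform n a x - qform n a y"

definition quadric :: "nat \<Rightarrow> (nat \<Rightarrow> nat \<Rightarrow> bit) \<Rightarrow> (nat \<Rightarrow> bit) set" where
  "quadric n a = {x \<in> pg_points n. qform n a x = 0}"

definition nonsingular :: "nat \<Rightarrow> (nat \<Rightarrow> nat \<Rightarrow> bit) \<Rightarrow> bool" where
  "nonsingular n a \<longleftrightarrow>
     \<not> (\<exists>v \<in> pg_points n. qform n a v = 0 \<and> (\<forall>w \<in> vecs n. bform n a v w = 0))"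

(* projective subspace of PG(n,2): nonempty set of points closed under sums of distinct points
   (i.e. the nonzero vectors of a nonzero linear subspace) *)
definition proj_subspace :: "nat \<Rightarrow> (nat \<Rightarrow> bit) set \<Rightarrow> bool" where
  "proj_subspace n S \<longleftrightarrow> S \<subseteq> pg_points n \<and> S \<noteq> {} \<and>
     (\<forall>x\<in>S. \<forall>y\<in>S. x \<noteq> y \<longrightarrow> vadd x y \<in> S)"

definition subspace_of_dim :: "nat \<Rightarrow> nat \<Rightarrow> (nat \<Rightarrow> bit) set \<Rightarrow> bool" where
  "subspace_of_dim n d S \<longleftrightarrow> proj_subspace n S \<and> card S = 2 ^ (d + 1) - 1"

definition proj_index :: "nat \<Rightarrow> (nat \<Rightarrow> nat \<Rightarrow> bit) \<Rightarrow> nat" where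
  "proj_index n a = (GREATEST d. \<exists>S. subspace_of_dim n d S \<and> S \<subseteq> quadric n a)"

(* point-graph adjacency: distinct points whose joining line {P,R,P+R} lies on the quadric *)
definition qadj :: "nat \<Rightarrow> (nat \<Rightarrow> nat \<Rightarrow> bit) \<Rightarrow> (nat \<Rightarrow> bit) \<Rightarrow> (nat \<Rightarrow> bit) \<Rightarrow> bool" where
  "qadj n a P R \<longleftrightarrow> P \<in> quadric n a \<and> R \<in> quadric n a \<and> P \<noteq> R \<and>
     {P, R, vadd P R} \<subseteq> quadric n a"

(* the subspace <alpha, X> spanned by alpha and the point X *)
definition join_pt :: "(nat \<Rightarrow> bit) set \<Rightarrow> (nat \<Rightarrow> bit) \<Rightarrow> (nat \<Rightarrow> bit) set" where
  "join_pt S X = S \<union> {X} \<union> (\<lambda>s. vadd X s) ` S"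

(* type (ii) points *)
definition typeX :: "nat \<Rightarrow> (nat \<Rightarrow> nat \<Rightarrow> bit) \<Rightarrow> (nat \<Rightarrow> bit) set \<Rightarrow> (nat \<Rightarrow> bit) set" where
  "typeX n a S = {X \<in> quadric n a. X \<notin> S \<and> join_pt S X \<subseteq> quadric n a}"

(* type (i) or (iii) points *)
definition typeY :: "nat \<Rightarrow> (nat \<Rightarrow> nat \<Rightarrow> bit) \<Rightarrow> (nat \<Rightarrow> bit) set \<Rightarrow> (nat \<Rightarrow> bit) set" where
  "typeY n a S = quadric n a - typeX n a S"

definition switched :: "nat \<Rightarrow> (nat \<Rightarrow> nat \<Rightarrow> bit) \<Rightarrow> (nat \<Rightarrow> bit) set \<Rightarrow> (nat \<Rightarrow> bit) \<Rightarrow> bool" where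
  "switched n a S R \<longleftrightarrow> R \<in> typeY n a S \<and>
     2 * card {X \<in> typeX n a S. qadj n a R X} = card (typeX n a S)"

definition adj_s :: "nat \<Rightarrow> (nat \<Rightarrow> nat \<Rightarrow> bit) \<Rightarrow> (nat \<Rightarrow> bit) set \<Rightarrow> (nat \<Rightarrow> bit) \<Rightarrow> (nat \<Rightarrow> bit) \<Rightarrow> bool" where
  "adj_s n a S u v =
    (if switched n a S u \<and> v \<in> typeX n a S then \<not> qadj n a u v
     else if switched n a S v \<and> u \<in> typeX n a S then \<not> qadj n a u v
     else qadj n a u v)"

definition graph_iso :: "'v set \<Rightarrow> ('v \<Rightarrow> 'v \<Rightarrow> bool) \<Rightarrow> 'w set \<Rightarrow> ('w \<Rightarrow> 'w \<Rightarrow> bool) \<Rightarrow> bool" where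
  "graph_iso V E W F \<longleftrightarrow> (\<exists>f. bij_betw f V W \<and> (\<forall>u\<in>V. \<forall>v\<in>V. E u v \<longleftrightarrow> F (f u) (f v)))"

end

theory Submission imports Defs "HOL-Library.FuncSet" begin

declare add_bit_eq_xor[simp del] mult_bit_eq_and[simp del]

lemma bit_self_add[simp]: "(x::bit) + x = 0"
  by (cases x) simp_all

lemma bit_minus_eq: "(x::bit) - y = x + y"
  by simp

lemma finite_bit_UNIV: "finite (UNIV::bit set)"
proof -
  have "UNIV = {0::bit, 1}" by (auto intro: bit.exhaust)
  then show ?thesis by (metis finite.emptyI finite_insert)
qed

abbreviation ZZ :: "nat \<Rightarrow> bit" where "ZZ \<equiv> (\<lambda>_. 0)"

lemma bform_eq: "bform n a x y = (\<Sum>i\<in>{0..n}. \<Sum>j\<in>{i..n}. a i j * (x i * y j + y i * x j))"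
proof -
  have "bform n a x y = (\<Sum>i\<in>{0..n}. \<Sum>j\<in>{i..n}. a i j * (x i + y i) * (x j + y j) + a i j * x i * x j + a i j * y i * y j)"
    by (simp add: bform_def qform_def vadd_def sum.distrib)
  also have "\<dots> = (\<Sum>i\<in>{0..n}. \<Sum>j\<in>{i..n}. a i j * (x i * y j + y i * x j))"
  proof (intro sum.cong refl)
    fix i j
    show "a i j * (x i + y i) * (x j + y j) + a i j * x i * x j + a i j * y i * y j = a i j * (x i * y j + y i * x j)"
      by (cases "a i j"; cases "x i"; cases "x j"; cases "y i"; cases "y j") simp_all
  qed
  finally show ?thesis .
qed

lemma bform_add2: "bform n a x (vadd y z) = bform n a x y + bform n a x z"
  by (simp add: bform_eq vadd_def sum.distrib[symmetric] algebra_simps)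

lemma bform_sym: "bform n a x y = bform n a y x"
  by (simp add: bform_eq add.commute mult.commute)

lemma bform_add1: "bform n a (vadd y z) x = bform n a y x + bform n a z x"
  by (metis bform_add2 bform_sym)

lemma bform_self[simp]: "bform n a x x = 0"
  by (simp add: bform_eq)

lemma bform_Z1[simp]: "bform n a ZZ x = 0"
  by (simp add: bform_eq)

lemma bform_Z2[simp]: "bform n a x ZZ = 0"
  by (simp add: bform_eq)

lemma qform_add: "qform n a (vadd x y) = qform n a x + qform n a y + bform n a x y"
proof -
  have "\<And>p q r::bit. r = p + q + (r - p - q)"
    by (case_tac p; case_tac q; case_tac r) simp_all
  then show ?thesis unfolding bform_def by blast
qed

lemma vadd_self[simp]: "vadd x x = ZZ" by (simp add: vadd_def)
lemma vadd_Z1[simp]: "vadd ZZ x = x" by (simp add: vadd_def)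
lemma vadd_Z2[simp]: "vadd x ZZ = x" by (simp add: vadd_def)
lemma vadd_comm: "vadd x y = vadd y x" by (simp add: vadd_def add.commute)
lemma vadd_assoc: "vadd (vadd x y) z = vadd x (vadd y z)" by (simp add: vadd_def add.assoc)
lemma vadd_cancel1[simp]: "vadd x (vadd x y) = y" by (simp add: vadd_def add.assoc[symmetric])
lemma vadd_cancel2[simp]: "vadd (vadd y x) x = y" by (simp add: vadd_def add.assoc)
lemma vadd_eq_Z[simp]: "vadd x y = ZZ \<longleftrightarrow> x = y"
proof
  assume "vadd x y = ZZ"
  then have "vadd x (vadd x y) = vadd x ZZ" by simp
  then show "x = y" by simp
qed simp
lemma vadd_inj1[simp]: "vadd x y = vadd x z \<longleftrightarrow> y = z"
  by (metis vadd_cancel1)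
lemma vadd_inj2[simp]: "vadd y x = vadd z x \<longleftrightarrow> y = z"
  by (metis vadd_cancel2)

lemma vecs_Z[simp]: "ZZ \<in> vecs n" by (simp add: vecs_def)
lemma vecs_add[simp]: "x \<in> vecs n \<Longrightarrow> y \<in> vecs n \<Longrightarrow> vadd x y \<in> vecs n"
  by (simp add: vecs_def vadd_def)

lemma finite_vecs: "finite (vecs n)"
proof -
  have "vecs n \<subseteq> (\<lambda>f i. if i \<le> n then f i else 0) ` (PiE {0..n} (\<lambda>_. UNIV :: bit set))"
  proof
    fix x assume x: "x \<in> vecs n"
    have "x = (\<lambda>i. if i \<le> n then restrict x {0..n} i else 0)"
      using x by (auto simp: vecs_def fun_eq_iff restrict_apply)
    moreover have "restrict x {0..n} \<in> PiE {0..n} (\<lambda>_. UNIV)" by simp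
    ultimately show "x \<in> (\<lambda>f i. if i \<le> n then f i else 0) ` (PiE {0..n} (\<lambda>_. UNIV :: bit set))"
      by blast
  qed
  moreover have "finite (PiE {0..n} (\<lambda>_. UNIV :: bit set))"
    by (rule finite_PiE) (simp_all add: finite_bit_UNIV)
  ultimately show ?thesis by (meson finite_imageI finite_subset)
qed

lemma quadric_iff: "x \<in> quadric n a \<longleftrightarrow> x \<in> vecs n \<and> x \<noteq> ZZ \<and> qform n a x = 0"
  by (auto simp: quadric_def pg_points_def)

lemma qadj_iff: "P \<in> quadric n a \<Longrightarrow> R \<in> quadric n a \<Longrightarrow> qadj n a P R \<longleftrightarrow> P \<noteq> R \<and> bform n a P R = 0"
  by (auto simp: qadj_def quadric_iff qform_add)

lemma add_in_quadric: "P \<in> quadric n a \<Longrightarrow> R \<in> quadric n a \<Longrightarrow> P \<noteq> R \<Longrightarrow> bform n a P R = 0 \<Longrightarrow> vadd P R \<in> quadric n a"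
  by (auto simp: quadric_iff qform_add)

lemma nonsing_witness: "nonsingular n a \<Longrightarrow> P \<in> quadric n a \<Longrightarrow> \<exists>w\<in>vecs n. bform n a P w = 1"
  by (auto simp: nonsingular_def quadric_def)


lemma presc2_vec:
  assumes ns: "nonsingular n a" and p: "p \<in> quadric n a" and q: "q \<in> quadric n a"
    and pq: "p \<noteq> q" and bpq: "bform n a p q = 0"
  shows "\<exists>y\<in>vecs n. bform n a y p = c1 \<and> bform n a y q = c2"
proof -
  obtain y1 where y1: "y1 \<in> vecs n" "bform n a p y1 = 1" using nonsing_witness[OF ns p] by blast
  obtain y2 where y2: "y2 \<in> vecs n" "bform n a q y2 = 1" using nonsing_witness[OF ns q] by blast
  have pq': "vadd p q \<in> quadric n a" using add_in_quadric[OF p q pq bpq] .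
  obtain y3 where y3: "y3 \<in> vecs n" "bform n a (vadd p q) y3 = 1" using nonsing_witness[OF ns pq'] by blast
  have y3': "bform n a y3 p + bform n a y3 q = 1" using y3(2) by (metis bform_add1 bform_sym)
  have h1: "bform n a y1 p = 1" "bform n a y2 q = 1" using y1 y2 by (simp_all add: bform_sym)
  define t1 where "t1 = bform n a y1 q"
  define t2 where "t2 = bform n a y2 p"
  define r where "r = bform n a y3 p"
  have r2: "bform n a y3 q = 1 + r" using y3' unfolding r_def
    by (cases "bform n a y3 p"; cases "bform n a y3 q") simp_all
  have "\<exists>y\<in>{ZZ, y1, y2, y3, vadd y1 y2, vadd y1 y3, vadd y2 y3, vadd (vadd y1 y2) y3}.
          bform n a y p = c1 \<and> bform n a y q = c2"
    using h1 r2 t1_def t2_def r_def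
    by (cases t1; cases t2; cases r; cases c1; cases c2) (simp_all add: bform_add1)
  moreover have "{ZZ, y1, y2, y3, vadd y1 y2, vadd y1 y3, vadd y2 y3, vadd (vadd y1 y2) y3} \<subseteq> vecs n"
    using y1 y2 y3 by simp
  ultimately show ?thesis by blast
qed

lemma singularize:
  assumes y: "y \<in> vecs n" and p: "p \<in> quadric n a" and byp: "bform n a y p = 1"
  shows "\<exists>z\<in>quadric n a. \<forall>v. bform n a v p = 0 \<longrightarrow> bform n a z v = bform n a y v"
proof (cases "qform n a y = 0")
  case True
  have "y \<noteq> ZZ" using byp by auto
  with True y show ?thesis by (auto simp: quadric_iff)
next
  case False
  then have qy: "qform n a y = 1" by simp
  have "vadd y p \<in> quadric n a"
    using y p qy byp by (auto simp: quadric_iff qform_add)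
  moreover have "\<forall>v. bform n a v p = 0 \<longrightarrow> bform n a (vadd y p) v = bform n a y v"
    by (metis add.right_neutral bform_add1 bform_sym)
  ultimately show ?thesis by blast
qed

lemma presc2:
  assumes ns: "nonsingular n a" and p: "p \<in> quadric n a" and q: "q \<in> quadric n a"
    and pq: "p \<noteq> q" and bpq: "bform n a p q = 0" and c: "c1 = 1 \<or> c2 = 1"
  shows "\<exists>z\<in>quadric n a. bform n a z p = c1 \<and> bform n a z q = c2"
proof -
  obtain y where y: "y \<in> vecs n" "bform n a y p = c1" "bform n a y q = c2"
    using presc2_vec[OF ns p q pq bpq] by blast
  have bpp: "bform n a p p = 0" "bform n a q p = 0" "bform n a p q = 0" "bform n a q q = 0"
    using bpq by (simp_all add: bform_sym)
  show ?thesis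
  proof (cases "c1 = 1")
    case True
    obtain z where "z \<in> quadric n a" "\<forall>v. bform n a v p = 0 \<longrightarrow> bform n a z v = bform n a y v"
      using singularize[OF y(1) p] y True by blast
    then show ?thesis using bpp y by (metis bform_sym)
  next
    case False
    then have c2: "c2 = 1" using c by simp
    obtain z where "z \<in> quadric n a" "\<forall>v. bform n a v q = 0 \<longrightarrow> bform n a z v = bform n a y v"
      using singularize[OF y(1) q] y c2 by blast
    then show ?thesis using bpp y by (metis bform_sym)
  qed
qed

lemma presc3:
  assumes ns: "nonsingular n a" and aq: "x0 \<in> quadric n a" and xq: "x \<in> quadric n a"
    and eq: "e \<in> quadric n a" and xe: "x \<noteq> e" and bxe: "bform n a x e = 0"
    and axe: "x0 \<noteq> vadd x e" and bax: "bform n a x0 x = 0" and bae: "bform n a x0 e = 0"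
  shows "\<exists>z\<in>quadric n a. bform n a z x0 = 1 \<and> bform n a z x = 1 \<and> bform n a z e = 1"
proof -
  have xeq: "vadd x e \<in> quadric n a" using add_in_quadric[OF xq eq xe bxe] .
  have ba: "bform n a x0 (vadd x e) = 0" using bax bae by (simp add: bform_add2)
  obtain y where y: "y \<in> vecs n" "bform n a y x0 = 1" "bform n a y (vadd x e) = 0"
    using presc2_vec[OF ns aq xeq axe ba] by blast
  obtain y2 where y2: "y2 \<in> vecs n" "bform n a y2 x = 1" "bform n a y2 e = 1"
    using presc2_vec[OF ns xq eq xe bxe] by blast
  have yy: "bform n a y x = bform n a y e" using y(3)
    by (cases "bform n a y x"; cases "bform n a y e") (simp_all add: bform_add2)
  have "\<exists>w\<in>vecs n. bform n a w x0 = 1 \<and> bform n a w x = 1 \<and> bform n a w e = 1"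
  proof (cases "bform n a y x = 1")
    case True then show ?thesis using y yy by metis
  next
    case F1: False
    show ?thesis
    proof (cases "bform n a y2 x0 = 1")
      case True then show ?thesis using y2 by metis
    next
      case False
      then show ?thesis using F1 y y2 yy
        by (intro bexI[of _ "vadd y y2"]) (simp_all add: bform_add1)
    qed
  qed
  then obtain w where w: "w \<in> vecs n" "bform n a w x0 = 1" "bform n a w x = 1" "bform n a w e = 1"
    by blast
  obtain z where "z \<in> quadric n a" "\<forall>v. bform n a v x0 = 0 \<longrightarrow> bform n a z v = bform n a w v"
    using singularize[OF w(1) aq w(2)] by blast
  moreover have "bform n a x0 x0 = 0" "bform n a x x0 = 0" "bform n a e x0 = 0"
    using bax bae by (simp_all add: bform_sym)
  ultimately show ?thesis using w by metis
qed


lemma bit_self_add2[simp]: "(x::bit) + (x + y) = y"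
  by (cases x; cases y) simp_all

definition subgrp :: "(nat \<Rightarrow> bit) set \<Rightarrow> bool" where
  "subgrp H \<longleftrightarrow> ZZ \<in> H \<and> (\<forall>x\<in>H. \<forall>y\<in>H. vadd x y \<in> H)"

lemma proj_Z: "proj_subspace n S \<Longrightarrow> ZZ \<notin> S"
  by (auto simp: proj_subspace_def pg_points_def)

lemma proj_vecs: "proj_subspace n S \<Longrightarrow> S \<subseteq> vecs n"
  by (auto simp: proj_subspace_def pg_points_def)

lemma proj_finite: "proj_subspace n S \<Longrightarrow> finite S"
  using proj_vecs finite_vecs finite_subset by blast

lemma proj_subgrp: "proj_subspace n S \<Longrightarrow> subgrp (insert ZZ S)"
  unfolding subgrp_def proj_subspace_def by (auto)

lemma proj_add: "proj_subspace n S \<Longrightarrow> x \<in> S \<Longrightarrow> y \<in> S \<Longrightarrow> x \<noteq> y \<Longrightarrow> vadd x y \<in> S"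
  unfolding proj_subspace_def by auto

lemma card_insZ: "subspace_of_dim n d S \<Longrightarrow> card (insert ZZ S) = 2^(d+1)"
proof -
  assume h: "subspace_of_dim n d S"
  then have "proj_subspace n S" "card S = 2^(d+1) - 1" by (auto simp: subspace_of_dim_def)
  moreover have "(1::nat) \<le> 2^(d+1)" by simp
  ultimately show ?thesis using proj_Z proj_finite by (simp add: card_insert_if)
qed

lemma ts_sub: "proj_subspace n S \<Longrightarrow> S \<subseteq> quadric n a \<Longrightarrow> x \<in> insert ZZ S \<Longrightarrow> y \<in> insert ZZ S
   \<Longrightarrow> bform n a x y = 0"
proof -
  assume S: "proj_subspace n S" "S \<subseteq> quadric n a" and x: "x \<in> insert ZZ S" and y: "y \<in> insert ZZ S"
  show ?thesis
  proof (cases "x = ZZ \<or> y = ZZ \<or> x = y")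
    case True then show ?thesis by auto
  next
    case False
    then have "x \<in> S" "y \<in> S" "x \<noteq> y" using x y by auto
    then have "vadd x y \<in> quadric n a" "x \<in> quadric n a" "y \<in> quadric n a"
      using proj_add[OF S(1)] S(2) by auto
    then show ?thesis by (simp add: quadric_iff qform_add)
  qed
qed

lemma index2:
  assumes fin: "finite H" and H: "subgrp H"
  shows "card H \<le> 2 * card {h\<in>H. bform n a h v = 0}"
proof (cases "\<exists>h0\<in>H. bform n a h0 v = 1")
  case False
  then have "{h\<in>H. bform n a h v = 0} = H" by auto
  then show ?thesis by simp
next
  case True
  then obtain h0 where h0: "h0 \<in> H" "bform n a h0 v = 1" by blast
  let ?A0 = "{h\<in>H. bform n a h v = 0}" and ?A1 = "{h\<in>H. bform n a h v = 1}"
  have "?A1 \<subseteq> vadd h0 ` ?A0"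
  proof
    fix h assume h: "h \<in> ?A1"
    then have "vadd h0 h \<in> ?A0" using H h0 by (auto simp: subgrp_def bform_add1)
    moreover have "h = vadd h0 (vadd h0 h)" by simp
    ultimately show "h \<in> vadd h0 ` ?A0" by blast
  qed
  have f0: "finite ?A0" using fin by simp
  have "card ?A1 \<le> card (vadd h0 ` ?A0)"
    using \<open>?A1 \<subseteq> vadd h0 ` ?A0\<close> f0 by (simp add: card_mono)
  also have "\<dots> \<le> card ?A0" by (rule card_image_le[OF f0])
  finally have c1: "card ?A1 \<le> card ?A0" .
  have "H = ?A0 \<union> ?A1" by auto
  moreover have "?A0 \<inter> ?A1 = {}" by auto
  ultimately have "card H = card ?A0 + card ?A1"
    using fin by (metis (no_types, lifting) card_Un_disjoint finite_Un)
  then show ?thesis using c1 by simp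
qed

lemma double_subgrp:
  assumes T: "subgrp T" and v: "v \<notin> T"
  shows "subgrp (T \<union> vadd v ` T)"
proof -
  have e1: "vadd (vadd v t1) (vadd v t2) = vadd t1 t2" for t1 t2
    by (rule ext) (simp add: vadd_def algebra_simps)
  have e2: "vadd t1 (vadd v t2) = vadd v (vadd t1 t2)" for t1 t2
    by (rule ext) (simp add: vadd_def algebra_simps)
  have e3: "vadd (vadd v t2) t1 = vadd v (vadd t1 t2)" for t1 t2
    by (rule ext) (simp add: vadd_def algebra_simps)
  show ?thesis using T unfolding subgrp_def
    by (auto simp: e1 e2 e3)
qed

lemma double_card:
  assumes fin: "finite T" and T: "subgrp T" and v: "v \<notin> T"
  shows "card (T \<union> vadd v ` T) = 2 * card T"
proof -
  have "T \<inter> vadd v ` T = {}"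
  proof (rule ccontr)
    assume "T \<inter> vadd v ` T \<noteq> {}"
    then obtain t where t: "t \<in> T" "vadd v t \<in> T" by auto
    then have "vadd (vadd v t) t \<in> T" using T unfolding subgrp_def by blast
    then show False using v by simp
  qed
  moreover have "card (vadd v ` T) = card T"
    by (rule card_image) (simp add: inj_on_def)
  ultimately show ?thesis using fin by (simp add: card_Un_disjoint)
qed

definition Kset :: "nat \<Rightarrow> (nat \<Rightarrow> nat \<Rightarrow> bit) \<Rightarrow> (nat \<Rightarrow> bit) set \<Rightarrow> (nat \<Rightarrow> bit) set \<Rightarrow> (nat \<Rightarrow> bit) set" where
  "Kset n a M0 T = {m\<in>M0. \<forall>t\<in>T. bform n a m t = 0}"

lemma count_ind:
  assumes finA: "finite A" and A: "subgrp A" and finM: "finite M0" and M: "subgrp M0"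
  shows "subgrp T \<Longrightarrow> T \<subseteq> A \<Longrightarrow> card (Kset n a M0 T) * card T \<le> card (Kset n a M0 A) * card A"
proof (induct "card A - card T" arbitrary: T rule: less_induct)
  case less
  show ?case
  proof (cases "T = A")
    case True then show ?thesis by simp
  next
    case False
    then obtain v where v: "v \<in> A" "v \<notin> T" using less.prems by blast
    define T' where "T' = T \<union> vadd v ` T"
    have finT: "finite T" using less.prems finA finite_subset by blast
    have sT': "subgrp T'" unfolding T'_def using double_subgrp[OF less.prems(1) v(2)] .
    have cT': "card T' = 2 * card T" unfolding T'_def using double_card[OF finT less.prems(1) v(2)] .
    have T'A: "T' \<subseteq> A" unfolding T'_def using less.prems A v by (auto simp: subgrp_def)
    have "card T' \<le> card A" using T'A finA card_mono by blast
    moreover have "card T > 0" using finT less.prems(1) by (auto simp: subgrp_def card_gt_0_iff)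
    ultimately have lt: "card A - card T' < card A - card T" using cT' by simp
    have IH: "card (Kset n a M0 T') * card T' \<le> card (Kset n a M0 A) * card A"
      using less.hyps[OF lt sT' T'A] .
    have ZT: "ZZ \<in> T" using less.prems(1) by (simp add: subgrp_def)
    have KT': "Kset n a M0 T' = {m \<in> Kset n a M0 T. bform n a m v = 0}"
    proof (rule set_eqI, rule iffI)
      fix m assume "m \<in> Kset n a M0 T'"
      then have "m \<in> M0" "\<forall>t\<in>T'. bform n a m t = 0" by (auto simp: Kset_def)
      moreover have "v \<in> T'" using ZT unfolding T'_def by (metis UnI2 image_eqI vadd_Z2)
      ultimately show "m \<in> {m \<in> Kset n a M0 T. bform n a m v = 0}"
        by (auto simp: Kset_def T'_def)
    next
      fix m assume "m \<in> {m \<in> Kset n a M0 T. bform n a m v = 0}"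
      then show "m \<in> Kset n a M0 T'" by (auto simp: Kset_def T'_def bform_add2)
    qed
    have finK: "finite (Kset n a M0 T)" using finM by (simp add: Kset_def)
    have sK: "subgrp (Kset n a M0 T)" using M
      by (auto simp: subgrp_def Kset_def bform_add1)
    have "card (Kset n a M0 T) \<le> 2 * card (Kset n a M0 T')"
      unfolding KT' by (rule index2[OF finK sK])
    then have "card (Kset n a M0 T) * card T \<le> 2 * card (Kset n a M0 T') * card T" by simp
    also have "\<dots> = card (Kset n a M0 T') * card T'" using cT' by simp
    finally show ?thesis using IH by linarith
  qed
qed


lemma typeX_iff:
  assumes S: "proj_subspace n S" "S \<subseteq> quadric n a"
  shows "x \<in> typeX n a S \<longleftrightarrow> x \<in> quadric n a \<and> x \<notin> S \<and> (\<forall>t\<in>S. bform n a x t = 0)"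
proof
  assume x: "x \<in> typeX n a S"
  then have xq: "x \<in> quadric n a" "x \<notin> S" and J: "join_pt S x \<subseteq> quadric n a"
    by (auto simp: typeX_def)
  have "bform n a x t = 0" if t: "t \<in> S" for t
  proof -
    have "vadd x t \<in> quadric n a" using J t by (auto simp: join_pt_def)
    moreover have "t \<in> quadric n a" using t S by auto
    ultimately show ?thesis using xq by (simp add: quadric_iff qform_add)
  qed
  then show "x \<in> quadric n a \<and> x \<notin> S \<and> (\<forall>t\<in>S. bform n a x t = 0)" using xq by blast
next
  assume h: "x \<in> quadric n a \<and> x \<notin> S \<and> (\<forall>t\<in>S. bform n a x t = 0)"
  have "vadd x t \<in> quadric n a" if t: "t \<in> S" for t
  proof -
    have tq: "t \<in> quadric n a" using t S by auto
    moreover have "x \<noteq> t" using h t by auto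
    ultimately show ?thesis using add_in_quadric h t by blast
  qed
  then have "join_pt S x \<subseteq> quadric n a" using S h by (auto simp: join_pt_def)
  then show "x \<in> typeX n a S" using h by (simp add: typeX_def)
qed

lemma exists_M:
  assumes "subspace_of_dim n s \<alpha>" "\<alpha> \<subseteq> quadric n a"
  shows "\<exists>M. subspace_of_dim n (proj_index n a) M \<and> M \<subseteq> quadric n a"
proof -
  let ?P = "\<lambda>d. \<exists>S. subspace_of_dim n d S \<and> S \<subseteq> quadric n a"
  have "?P s" using assms by blast
  moreover have "y \<le> card (vecs n)" if "?P y" for y
  proof -
    obtain S where S: "subspace_of_dim n y S" using \<open>?P y\<close> by blast
    then have "card S = 2^(y+1) - 1" "S \<subseteq> vecs n"
      using proj_vecs by (auto simp: subspace_of_dim_def)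
    then have "card S \<le> card (vecs n)" using finite_vecs card_mono by metis
    moreover have "y < 2^y" by (rule less_exp)
    then have "y \<le> 2 * 2^y - 1" by linarith
    then have "y \<le> 2^(y+1) - 1" by simp
    ultimately show ?thesis using \<open>card S = _\<close> by linarith
  qed
  ultimately have "?P (Greatest ?P)" by (rule GreatestI_nat)
  then show ?thesis unfolding proj_index_def .
qed

lemma X_nonempty:
  assumes al: "subspace_of_dim n s \<alpha>" "\<alpha> \<subseteq> quadric n a"
    and M: "subspace_of_dim n g M" "M \<subseteq> quadric n a" and sg: "s < g"
  shows "\<exists>x. x \<in> typeX n a \<alpha>"
proof -
  have pa: "proj_subspace n \<alpha>" and pM: "proj_subspace n M"
    using al M by (auto simp: subspace_of_dim_def)
  let ?A = "insert ZZ \<alpha>" and ?M0 = "insert ZZ M"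
  let ?T = "?A \<inter> ?M0"
  have finA: "finite ?A" and finM: "finite ?M0" using proj_finite pa pM by auto
  have sA: "subgrp ?A" and sM: "subgrp ?M0" using proj_subgrp pa pM by auto
  have sT: "subgrp ?T" using sA sM unfolding subgrp_def by blast
  have KT: "Kset n a ?M0 ?T = ?M0"
    using ts_sub[OF pM M(2)] by (auto simp: Kset_def)
  have ineq: "card (Kset n a ?M0 ?T) * card ?T \<le> card (Kset n a ?M0 ?A) * card ?A"
    using count_ind[OF finA sA finM sM sT] by blast
  have cA: "card ?A = 2^(s+1)" and cM: "card ?M0 = 2^(g+1)"
    using card_insZ al M by auto
  have "(2::nat)^(s+1) < 2^(g+1)" using sg by simp
  then have lt: "card ?A < card ?M0" using cA cM by simp
  have "card ?T < card (Kset n a ?M0 ?A)"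
  proof (rule ccontr)
    assume "\<not> card ?T < card (Kset n a ?M0 ?A)"
    then have "card (Kset n a ?M0 ?A) * card ?A \<le> card ?T * card ?A" by simp
    also have "\<dots> < card ?T * card ?M0"
      using lt finA by (simp add: card_gt_0_iff)
    finally show False using ineq KT by (simp add: mult.commute)
  qed
  moreover have "finite ?T" using finA by simp
  ultimately have "\<not> Kset n a ?M0 ?A \<subseteq> ?T" using card_mono by (metis leD)
  then obtain m where m: "m \<in> Kset n a ?M0 ?A" "m \<notin> ?T" by blast
  then have mM: "m \<in> ?M0" and mA: "m \<notin> ?A" and orth: "\<forall>t\<in>?A. bform n a m t = 0"
    by (auto simp: Kset_def)
  then have "m \<in> quadric n a" using M(2) by auto
  then have "m \<in> typeX n a \<alpha>" using typeX_iff[OF pa al(2)] mA orth by auto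
  then show ?thesis by blast
qed


lemma card_swap:
  assumes "finite A0" "finite A1" "vadd t ` A0 \<subseteq> A1" "vadd t ` A1 \<subseteq> A0"
  shows "card A0 = card A1"
proof -
  have inj: "inj_on (vadd t) B" for B by (simp add: inj_on_def)
  have "card A0 \<le> card A1" using card_image[OF inj, of A0] card_mono[OF assms(2) assms(3)] by simp
  moreover have "card A1 \<le> card A0" using card_image[OF inj, of A1] card_mono[OF assms(1) assms(4)] by simp
  ultimately show ?thesis by simp
qed

lemma X_shift:
  assumes pa: "proj_subspace n \<alpha>" and aq: "\<alpha> \<subseteq> quadric n a" and t: "t \<in> \<alpha>"
    and x: "x \<in> typeX n a \<alpha>"
  shows "vadd t x \<in> typeX n a \<alpha>"
proof -
  have xx: "x \<in> quadric n a" "x \<notin> \<alpha>" "\<forall>t\<in>\<alpha>. bform n a x t = 0"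
    using x typeX_iff[OF pa aq] by auto
  have tq: "t \<in> quadric n a" using t aq by auto
  have "t \<noteq> x" using t xx by auto
  moreover have "bform n a t x = 0" using xx t bform_sym by metis
  ultimately have q: "vadd t x \<in> quadric n a" using add_in_quadric tq xx by blast
  have "vadd t x \<notin> \<alpha>"
  proof
    assume "vadd t x \<in> \<alpha>"
    moreover have "subgrp (insert ZZ \<alpha>)" using proj_subgrp[OF pa] .
    ultimately have "vadd t (vadd t x) \<in> insert ZZ \<alpha>" using t unfolding subgrp_def by blast
    then show False using xx by (auto simp: quadric_iff)
  qed
  moreover have "\<forall>t'\<in>\<alpha>. bform n a (vadd t x) t' = 0"
    using ts_sub[OF pa aq] t xx by (simp add: bform_add1)
  ultimately show ?thesis using q typeX_iff[OF pa aq] by auto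
qed

lemma finite_typeX: "finite (typeX n a S)"
proof -
  have "typeX n a S \<subseteq> vecs n" by (auto simp: typeX_def quadric_iff)
  then show ?thesis using finite_vecs finite_subset by blast
qed

lemma switched_iff:
  assumes pa: "proj_subspace n \<alpha>" and aq: "\<alpha> \<subseteq> quadric n a" and Xne: "typeX n a \<alpha> \<noteq> {}"
    and R: "R \<in> quadric n a"
  shows "switched n a \<alpha> R \<longleftrightarrow> (\<exists>t\<in>\<alpha>. bform n a R t = 1)"
proof
  assume sw: "switched n a \<alpha> R"
  show "\<exists>t\<in>\<alpha>. bform n a R t = 1"
  proof (rule ccontr)
    assume "\<not> (\<exists>t\<in>\<alpha>. bform n a R t = 1)"
    then have orth: "\<forall>t\<in>\<alpha>. bform n a R t = 0" by simp
    have "R \<in> typeY n a \<alpha>" using sw by (simp add: switched_def)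
    then have "R \<notin> typeX n a \<alpha>" by (simp add: typeY_def)
    then have Ra: "R \<in> \<alpha>" using typeX_iff[OF pa aq] R orth by auto
    have "{X \<in> typeX n a \<alpha>. qadj n a R X} = typeX n a \<alpha>"
    proof -
      have "qadj n a R X" if X: "X \<in> typeX n a \<alpha>" for X
      proof -
        have "X \<in> quadric n a" "X \<notin> \<alpha>" "bform n a X R = 0" using X typeX_iff[OF pa aq] Ra by auto
        then show ?thesis using qadj_iff[OF R] Ra bform_sym by metis
      qed
      then show ?thesis by blast
    qed
    then have "2 * card (typeX n a \<alpha>) = card (typeX n a \<alpha>)" using sw by (simp add: switched_def)
    then have "card (typeX n a \<alpha>) = 0" by simp
    then show False using Xne finite_typeX by auto
  qed
next
  assume "\<exists>t\<in>\<alpha>. bform n a R t = 1"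
  then obtain t where t: "t \<in> \<alpha>" "bform n a R t = 1" by blast
  let ?X = "typeX n a \<alpha>"
  have RX: "R \<notin> ?X" using typeX_iff[OF pa aq] t by auto
  then have RY: "R \<in> typeY n a \<alpha>" using R by (simp add: typeY_def)
  let ?A0 = "{x \<in> ?X. bform n a R x = 0}" and ?A1 = "{x \<in> ?X. bform n a R x = 1}"
  have A0: "{x \<in> ?X. qadj n a R x} = ?A0"
  proof -
    have "qadj n a R x \<longleftrightarrow> bform n a R x = 0" if "x \<in> ?X" for x
      using that RX qadj_iff[OF R, of x] by (auto simp: typeX_def)
    then show ?thesis by blast
  qed
  have shiftB: "bform n a R (vadd t x) = 1 + bform n a R x" for x
    using t by (simp add: bform_add2)
  have "vadd t ` ?A0 \<subseteq> ?A1" using X_shift[OF pa aq t(1)] shiftB by auto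
  moreover have "vadd t ` ?A1 \<subseteq> ?A0" using X_shift[OF pa aq t(1)] shiftB by auto
  ultimately have c: "card ?A0 = card ?A1" using card_swap finite_typeX by (metis (no_types, lifting) finite_subset mem_Collect_eq subsetI)
  have "?X = ?A0 \<union> ?A1" by auto
  moreover have "?A0 \<inter> ?A1 = {}" by auto
  ultimately have "card ?X = card ?A0 + card ?A1"
    using finite_typeX by (metis (no_types, lifting) card_Un_disjoint finite_Un)
  then show "switched n a \<alpha> R" using RY A0 c by (simp add: switched_def)
qed


definition PT :: "'v set \<Rightarrow> ('v \<Rightarrow> 'v \<Rightarrow> bool) \<Rightarrow> bool" where
  "PT V E \<longleftrightarrow> (\<forall>u\<in>V. \<forall>v\<in>V. E u v \<longrightarrow> (\<exists>w\<in>V. E u w \<and> E v w \<and>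
      (\<forall>z\<in>V. z \<noteq> u \<longrightarrow> z \<noteq> v \<longrightarrow> z \<noteq> w \<longrightarrow> (E z u \<longleftrightarrow> (E z v \<longleftrightarrow> E z w)))))"

lemma PT_iso:
  assumes iso: "graph_iso V E W F" and pt: "PT W F"
  shows "PT V E"
proof -
  obtain f where bij: "bij_betw f V W" and adj: "\<forall>u\<in>V. \<forall>v\<in>V. E u v \<longleftrightarrow> F (f u) (f v)"
    using iso unfolding graph_iso_def by (elim exE conjE)
  have fV: "f x \<in> W" if "x \<in> V" for x using bij that by (rule bij_betw_apply)
  have inj: "inj_on f V" using bij by (rule bij_betw_imp_inj_on)
  have sur: "f ` V = W" using bij by (rule bij_betw_imp_surj_on)
  show ?thesis unfolding PT_def
  proof (intro ballI impI)
    fix u v assume u: "u \<in> V" and v: "v \<in> V" and uv: "E u v"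
    then have "F (f u) (f v)" using adj[rule_format, OF u v] by simp
    then have "\<exists>w'\<in>W. F (f u) w' \<and> F (f v) w' \<and> (\<forall>z\<in>W. z \<noteq> f u \<longrightarrow> z \<noteq> f v \<longrightarrow> z \<noteq> w' \<longrightarrow> (F z (f u) \<longleftrightarrow> (F z (f v) \<longleftrightarrow> F z w')))"
      using pt[unfolded PT_def, rule_format, OF fV[OF u] fV[OF v]] by simp
    then obtain w' where w': "w' \<in> W" "F (f u) w'" "F (f v) w'"
      and Z: "\<forall>z\<in>W. z \<noteq> f u \<longrightarrow> z \<noteq> f v \<longrightarrow> z \<noteq> w' \<longrightarrow> (F z (f u) \<longleftrightarrow> (F z (f v) \<longleftrightarrow> F z w'))"
      using pt fV[OF u] fV[OF v] by (elim bexE conjE)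
    obtain w where w: "w \<in> V" "f w = w'" using w'(1) sur by blast
    show "\<exists>w\<in>V. E u w \<and> E v w \<and> (\<forall>z\<in>V. z \<noteq> u \<longrightarrow> z \<noteq> v \<longrightarrow> z \<noteq> w \<longrightarrow> (E z u \<longleftrightarrow> (E z v \<longleftrightarrow> E z w)))"
    proof (intro bexI[OF _ w(1)] conjI ballI impI)
      show "E u w" using adj[rule_format, OF u w(1)] w(2) w'(2) by simp
      show "E v w" using adj[rule_format, OF v w(1)] w(2) w'(3) by simp
      fix z assume z: "z \<in> V" "z \<noteq> u" "z \<noteq> v" "z \<noteq> w"
      have "f z \<noteq> f u" using inj z(1,2) u by (simp add: inj_on_eq_iff)
      moreover have "f z \<noteq> f v" using inj z(1,3) v by (simp add: inj_on_eq_iff)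
      moreover have "f z \<noteq> w'" using inj z(1,4) w by (metis inj_on_eq_iff)
      ultimately have "F (f z) (f u) \<longleftrightarrow> (F (f z) (f v) \<longleftrightarrow> F (f z) w')" by (rule Z[rule_format, OF fV[OF z(1)]])
      then show "E z u \<longleftrightarrow> (E z v \<longleftrightarrow> E z w)"
        using adj[rule_format, OF z(1) u] adj[rule_format, OF z(1) v] adj[rule_format, OF z(1) w(1)] w(2)
        by simp
    qed
  qed
qed

lemma PT_quadric: "PT (quadric n a) (qadj n a)"
  unfolding PT_def
proof (intro ballI impI)
  fix u v assume u: "u \<in> quadric n a" and v: "v \<in> quadric n a" and uv: "qadj n a u v"
  let ?w = "vadd u v"
  have w: "?w \<in> quadric n a" using uv by (simp add: qadj_def)
  have uvB: "u \<noteq> v" "bform n a u v = 0" using uv qadj_iff[OF u v] by auto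
  have "u \<noteq> ?w"
  proof
    assume "u = ?w" then have "vadd u u = vadd u ?w" by simp
    then have "v = ZZ" by simp
    then show False using v by (simp add: quadric_iff)
  qed
  moreover have "v \<noteq> ?w"
  proof
    assume "v = ?w" then have "vadd v v = vadd ?w v" by simp
    then have "u = ZZ" by simp
    then show False using u by (simp add: quadric_iff)
  qed
  ultimately have A: "qadj n a u ?w" "qadj n a v ?w"
    using qadj_iff[OF u w] qadj_iff[OF v w] uvB by (simp_all add: bform_add2 bform_sym)
  show "\<exists>w\<in>quadric n a. qadj n a u w \<and> qadj n a v w \<and>
      (\<forall>z\<in>quadric n a. z \<noteq> u \<longrightarrow> z \<noteq> v \<longrightarrow> z \<noteq> w \<longrightarrow> (qadj n a z u \<longleftrightarrow> (qadj n a z v \<longleftrightarrow> qadj n a z w)))"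
  proof (intro bexI[OF _ w] conjI A ballI impI)
    fix z assume z: "z \<in> quadric n a" "z \<noteq> u" "z \<noteq> v" "z \<noteq> ?w"
    have e: "bform n a z ?w = bform n a z u + bform n a z v" by (simp add: bform_add2)
    show "qadj n a z u \<longleftrightarrow> (qadj n a z v \<longleftrightarrow> qadj n a z ?w)"
      using z qadj_iff[OF z(1) u] qadj_iff[OF z(1) v] qadj_iff[OF z(1) w] e
      by (cases "bform n a z u"; cases "bform n a z v") simp_all
  qed
qed

lemma adj_eval:
  assumes u: "u \<in> quadric n a" and v: "v \<in> quadric n a"
  shows "adj_s n a S u v \<longleftrightarrow> (u \<noteq> v \<and> (bform n a u v = 0 \<longleftrightarrow>
      \<not> ((switched n a S u \<and> v \<in> typeX n a S) \<or> (switched n a S v \<and> u \<in> typeX n a S))))"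
proof -
  have nX: "switched n a S x \<Longrightarrow> x \<notin> typeX n a S" for x by (simp add: switched_def typeY_def)
  have q: "qadj n a u v \<longleftrightarrow> u \<noteq> v \<and> bform n a u v = 0" by (rule qadj_iff[OF u v])
  show ?thesis
  proof (cases "switched n a S u \<and> v \<in> typeX n a S")
    case True
    then have "u \<noteq> v" using nX by blast
    then show ?thesis using True q unfolding adj_s_def by simp
  next
    case F1: False
    show ?thesis
    proof (cases "switched n a S v \<and> u \<in> typeX n a S")
      case True
      then have "u \<noteq> v" using nX by blast
      then show ?thesis using True F1 q unfolding adj_s_def by simp
    next
      case False
      have e: "adj_s n a S u v = qadj n a u v" unfolding adj_s_def by (simp only: F1 False if_False)
      show ?thesis unfolding e q using F1 False by blast
    qed
  qed
qed

lemma notPT: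
  assumes ns: "nonsingular n a" and pa: "proj_subspace n \<alpha>" and aq: "\<alpha> \<subseteq> quadric n a"
    and c3: "3 \<le> card \<alpha>" and Xne: "typeX n a \<alpha> \<noteq> {}"
  shows "\<not> PT (quadric n a) (adj_s n a \<alpha>)"
proof
  assume pt: "PT (quadric n a) (adj_s n a \<alpha>)"
  let ?Q = "quadric n a" and ?X = "typeX n a \<alpha>"
  have swi: "switched n a \<alpha> R \<longleftrightarrow> (\<exists>t\<in>\<alpha>. bform n a R t = 1)" if "R \<in> ?Q" for R
    using switched_iff[OF pa aq Xne that] .
  have tsa: "bform n a s t = 0" if "s \<in> \<alpha>" "t \<in> \<alpha>" for s t
    using ts_sub[OF pa aq] that by blast
  have Xc: "x \<in> ?X \<longleftrightarrow> x \<in> ?Q \<and> x \<notin> \<alpha> \<and> (\<forall>t\<in>\<alpha>. bform n a x t = 0)" for x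
    using typeX_iff[OF pa aq] .
  have nswa: "\<not> switched n a \<alpha> t" if "t \<in> \<alpha>" for t
    using swi[of t] that aq tsa by auto
  have nswX: "\<not> switched n a \<alpha> t" if "t \<in> ?X" for t
    using that by (simp add: switched_def typeY_def)
  have aX: "t \<notin> ?X" if "t \<in> \<alpha>" for t using that Xc by blast
  obtain x where x: "x \<in> ?X" using Xne by blast
  have xQ: "x \<in> ?Q" and xa: "x \<notin> \<alpha>" and xo: "\<forall>t\<in>\<alpha>. bform n a x t = 0" using x Xc by auto
  have "\<alpha> \<noteq> {}" using c3 by auto
  then obtain a0 where a0: "a0 \<in> \<alpha>" by blast
  have a0Q: "a0 \<in> ?Q" using a0 aq by auto
  have a0x: "a0 \<noteq> x" using a0 xa by auto
  have ba0x: "bform n a a0 x = 0" using xo a0 bform_sym by metis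
  obtain u where uQ: "u \<in> ?Q" and ua0: "bform n a u a0 = 1" and ux: "bform n a u x = 1"
    using presc2[OF ns a0Q xQ a0x ba0x, of 1 1] by auto
  have swu: "switched n a \<alpha> u" using swi[OF uQ] ua0 a0 by blast
  have uX: "u \<notin> ?X" using swu nswX by blast
  have ua: "u \<notin> \<alpha>" using swu nswa by blast
  have u_ne_x: "u \<noteq> x" using ux by auto
  have "adj_s n a \<alpha> u x" using adj_eval[OF uQ xQ, of \<alpha>] u_ne_x ux swu x by simp
  then have "\<exists>w\<in>?Q. adj_s n a \<alpha> u w \<and> adj_s n a \<alpha> x w \<and> (\<forall>z\<in>?Q. z \<noteq> u \<longrightarrow> z \<noteq> x \<longrightarrow> z \<noteq> w \<longrightarrow>
      (adj_s n a \<alpha> z u \<longleftrightarrow> (adj_s n a \<alpha> z x \<longleftrightarrow> adj_s n a \<alpha> z w)))"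
    using pt[unfolded PT_def, rule_format, OF uQ xQ] by simp
  then obtain w where wQ: "w \<in> ?Q" and uw: "adj_s n a \<alpha> u w" and xw: "adj_s n a \<alpha> x w"
    and Zw: "\<forall>z\<in>?Q. z \<noteq> u \<longrightarrow> z \<noteq> x \<longrightarrow> z \<noteq> w \<longrightarrow>
      (adj_s n a \<alpha> z u \<longleftrightarrow> (adj_s n a \<alpha> z x \<longleftrightarrow> adj_s n a \<alpha> z w))"
    by (elim bexE conjE)
  show False
  proof (cases "w \<in> \<alpha> \<or> w \<in> ?X")
    case True
    have nsww: "\<not> switched n a \<alpha> w" using True nswa nswX by blast
    have bwa0: "bform n a a0 w = 0" using True tsa a0 xo Xc bform_sym by metis
    have a0w: "a0 \<noteq> w"
    proof
      assume "a0 = w"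
      then have "w \<in> \<alpha>" using a0 by simp
      then have "w \<notin> ?X" using aX by blast
      then have "bform n a u w = 0" using adj_eval[OF uQ wQ, of \<alpha>] uw nsww by auto
      then show False using ua0 \<open>a0 = w\<close> by simp
    qed
    have a0u: "a0 \<noteq> u" using ua a0 by auto
    have e1: "\<not> adj_s n a \<alpha> a0 u" using adj_eval[OF a0Q uQ, of \<alpha>] ua0 bform_sym aX[OF a0] nswa[OF a0]
      by (metis zero_neq_one)
    have e2: "adj_s n a \<alpha> a0 x" using adj_eval[OF a0Q xQ, of \<alpha>] ba0x a0x nswa[OF a0] aX[OF a0] nswX[OF x]
      by simp
    have e3: "adj_s n a \<alpha> a0 w" using adj_eval[OF a0Q wQ, of \<alpha>] bwa0 a0w nswa[OF a0] aX[OF a0] nsww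
      by simp
    show False using Zw a0Q a0u a0x a0w e1 e2 e3 by blast
  next
    case False
    then have wa: "w \<notin> \<alpha>" and wX: "w \<notin> ?X" by auto
    then have "\<exists>t\<in>\<alpha>. bform n a w t = 1" using Xc wQ by auto
    then have sww: "switched n a \<alpha> w" using swi[OF wQ] by blast
    have uwB: "u \<noteq> w" "bform n a u w = 0" using adj_eval[OF uQ wQ, of \<alpha>] uw uX wX by auto
    have xwB: "bform n a x w = 1" using adj_eval[OF xQ wQ, of \<alpha>] xw sww x by auto
    show False
    proof (cases "\<exists>a'\<in>\<alpha>. bform n a a' u \<noteq> bform n a a' w")
      case True
      then obtain a' where a': "a' \<in> \<alpha>" "bform n a a' u \<noteq> bform n a a' w" by blast
      have a'Q: "a' \<in> ?Q" using a' aq by auto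
      have ne: "a' \<noteq> u" "a' \<noteq> x" "a' \<noteq> w" using a' ua xa wa by auto
      have e1: "adj_s n a \<alpha> a' u \<longleftrightarrow> bform n a a' u = 0"
        using adj_eval[OF a'Q uQ, of \<alpha>] ne nswa[OF a'(1)] aX[OF a'(1)] by auto
      have e2: "adj_s n a \<alpha> a' x" using adj_eval[OF a'Q xQ, of \<alpha>] ne nswa[OF a'(1)] aX[OF a'(1)] nswX[OF x]
          xo a'(1) bform_sym by metis
      have e3: "adj_s n a \<alpha> a' w \<longleftrightarrow> bform n a a' w = 0"
        using adj_eval[OF a'Q wQ, of \<alpha>] ne nswa[OF a'(1)] aX[OF a'(1)] by auto
      have "adj_s n a \<alpha> a' u \<longleftrightarrow> (adj_s n a \<alpha> a' x \<longleftrightarrow> adj_s n a \<alpha> a' w)" using Zw a'Q ne by blast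
      then show False using e1 e2 e3 a'(2)
        by (cases "bform n a a' u"; cases "bform n a a' w") simp_all
    next
      case False
      then have same: "\<forall>t\<in>\<alpha>. bform n a t u = bform n a t w" by blast
      define e where "e = vadd u w"
      have eQ: "e \<in> ?Q" unfolding e_def using add_in_quadric[OF uQ wQ uwB] .
      have eo: "bform n a t e = 0" if "t \<in> \<alpha>" for t
        using same that by (simp add: e_def bform_add2)
      have xe: "bform n a x e = 0" using ux xwB bform_sym
        by (simp add: e_def bform_add2)
      have we: "w = vadd u e" by (simp add: e_def)
      have x_ne_e: "x \<noteq> e"
      proof
        assume "x = e"
        then have "w = vadd u x" using we by simp
        then have "qform n a w = qform n a u + qform n a x + bform n a u x" using qform_add by simp
        then show False using uQ xQ wQ ux by (simp add: quadric_iff)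
      qed
      have "\<exists>a1\<in>\<alpha>. a1 \<noteq> e \<and> a1 \<noteq> vadd x e"
      proof (rule ccontr)
        assume "\<not> ?thesis"
        then have "\<alpha> \<subseteq> {e, vadd x e}" by blast
        then have "card \<alpha> \<le> card {e, vadd x e}" by (simp add: card_mono)
        also have "\<dots> \<le> 2" by (simp add: card_insert_if)
        finally show False using c3 by simp
      qed
      then obtain a1 where a1: "a1 \<in> \<alpha>" "a1 \<noteq> e" "a1 \<noteq> vadd x e" by blast
      have a1Q: "a1 \<in> ?Q" using a1 aq by auto
      have ba1x: "bform n a a1 x = 0" using xo a1 bform_sym by metis
      obtain z where zQ: "z \<in> ?Q" and za1: "bform n a z a1 = 1" and zx: "bform n a z x = 1"
        and ze: "bform n a z e = 1"
        using presc3[OF ns a1Q xQ eQ x_ne_e xe a1(3) ba1x eo[OF a1(1)]] by blast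
      have swz: "switched n a \<alpha> z" using swi[OF zQ] za1 a1 by blast
      have zX: "z \<notin> ?X" using swz nswX by blast
      have ue: "bform n a u e = 0" using uwB by (simp add: e_def bform_add2)
      have wee: "bform n a w e = 0" using uwB bform_sym by (simp add: e_def bform_add2)
      have ne: "z \<noteq> u" "z \<noteq> x" "z \<noteq> w" using ze ue wee zx by auto
      have zw: "bform n a z w = bform n a z u + 1" using ze by (simp add: we bform_add2)
      have e1: "adj_s n a \<alpha> z u \<longleftrightarrow> bform n a z u = 0"
        using adj_eval[OF zQ uQ, of \<alpha>] ne zX uX by auto
      have e2: "adj_s n a \<alpha> z x" using adj_eval[OF zQ xQ, of \<alpha>] ne swz x zx by simp
      have e3: "adj_s n a \<alpha> z w \<longleftrightarrow> bform n a z w = 0"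
        using adj_eval[OF zQ wQ, of \<alpha>] ne zX wX by auto
      have "adj_s n a \<alpha> z u \<longleftrightarrow> (adj_s n a \<alpha> z x \<longleftrightarrow> adj_s n a \<alpha> z w)" using Zw zQ ne by blast
      then show False using e1 e2 e3 zw
        by (cases "bform n a z u") simp_all
    qed
  qed
qed

lemma iso0:
  assumes PQ: "P \<in> quadric n a" and Xne: "typeX n a {P} \<noteq> {}"
  shows "graph_iso (quadric n a) (adj_s n a {P}) (quadric n a) (qadj n a)"
proof -
  let ?Q = "quadric n a" and ?X = "typeX n a {P}"
  have pa: "proj_subspace n {P}" using PQ by (auto simp: proj_subspace_def quadric_def)
  have aq: "{P} \<subseteq> ?Q" using PQ by simp
  have Xc: "x \<in> ?X \<longleftrightarrow> x \<in> ?Q \<and> x \<noteq> P \<and> bform n a x P = 0" for x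
    using typeX_iff[OF pa aq] by auto
  have swi: "switched n a {P} R \<longleftrightarrow> bform n a R P = 1" if "R \<in> ?Q" for R
    using switched_iff[OF pa aq Xne that] by auto
  have nswX: "\<not> switched n a {P} t" if "t \<in> ?X" for t
    using that by (simp add: switched_def typeY_def)
  have fX: "vadd v P \<in> ?X" if "v \<in> ?X" for v
    using X_shift[OF pa aq _ that, of P] vadd_comm by (metis singletonI)
  define f where "f v = (if v \<in> ?X then vadd v P else v)" for v
  have ff: "f (f v) = v" if "v \<in> ?Q" for v
    using fX by (simp add: f_def)
  have fQ: "f v \<in> ?Q" if "v \<in> ?Q" for v
    using fX that Xc by (simp add: f_def)
  have bij: "bij_betw f ?Q ?Q"
    by (rule bij_betw_byWitness[where f'=f]) (use ff fQ in auto)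
  have adj: "adj_s n a {P} u v \<longleftrightarrow> qadj n a (f u) (f v)" if u: "u \<in> ?Q" and v: "v \<in> ?Q" for u v
  proof -
    have PP: "bform n a P P = 0" by simp
    have A: "adj_s n a {P} u v \<longleftrightarrow> (u \<noteq> v \<and> (bform n a u v = 0 \<longleftrightarrow>
      \<not> ((switched n a {P} u \<and> v \<in> ?X) \<or> (switched n a {P} v \<and> u \<in> ?X))))"
      by (rule adj_eval[OF u v])
    have B: "qadj n a (f u) (f v) \<longleftrightarrow> f u \<noteq> f v \<and> bform n a (f u) (f v) = 0"
      by (rule qadj_iff[OF fQ[OF u] fQ[OF v]])
    have neq: "f u \<noteq> f v \<longleftrightarrow> u \<noteq> v" using ff u v by metis
    have nZ: "u \<noteq> ZZ" "v \<noteq> ZZ" using u v by (auto simp: quadric_iff)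
    have oth: "x \<in> ?Q \<Longrightarrow> x \<notin> ?X \<Longrightarrow> x \<noteq> P \<Longrightarrow> bform n a x P = 1" for x
      using Xc by auto
    show ?thesis
    proof (cases "u \<in> ?X")
      case uX: True
      have uP: "bform n a u P = 0" "bform n a P u = 0" using uX Xc bform_sym by metis+
      show ?thesis
      proof (cases "v \<in> ?X")
        case True
        have vP: "bform n a v P = 0" "bform n a P v = 0" using True Xc bform_sym by metis+
        have "bform n a (f u) (f v) = bform n a u v"
          using uX True uP vP by (simp add: f_def bform_add1 bform_add2)
        then show ?thesis unfolding A B neq using nswX[OF uX] nswX[OF True] by simp
      next
        case False
        have fv: "f v = v" "f u = vadd u P" using False uX by (simp_all add: f_def)
        have "bform n a (f u) (f v) = bform n a u v + bform n a v P"
          using fv by (simp only: bform_add1 bform_sym[of n a P v])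
        moreover have "u \<noteq> v" using uX False by auto
        moreover have "switched n a {P} v \<longleftrightarrow> bform n a v P = 1" using swi[OF v] .
        ultimately show ?thesis unfolding A B neq using nswX[OF uX] uX
          by (cases "bform n a u v"; cases "bform n a v P") simp_all
      qed
    next
      case uX: False
      show ?thesis
      proof (cases "v \<in> ?X")
        case True
        have fv: "f u = u" "f v = vadd v P" using True uX by (simp_all add: f_def)
        have "bform n a (f u) (f v) = bform n a u v + bform n a u P"
          using fv by (simp add: bform_add2)
        moreover have "u \<noteq> v" using uX True by auto
        moreover have "switched n a {P} u \<longleftrightarrow> bform n a u P = 1" using swi[OF u] .
        ultimately show ?thesis unfolding A B neq using nswX[OF True] True
          by (cases "bform n a u v"; cases "bform n a u P") simp_all
      next
        case False
        have fv: "f u = u" "f v = v" using False uX by (simp_all add: f_def)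
        show ?thesis unfolding A B neq fv using False uX qadj_iff[OF u v] by simp
      qed
    qed
  qed
  show ?thesis unfolding graph_iso_def using bij adj by blast
qed

theorem theorem6p1:
  fixes n g s :: nat and a :: "nat \<Rightarrow> nat \<Rightarrow> bit" and \<alpha> :: "(nat \<Rightarrow> bit) set"
  assumes "nonsingular n a"
    and "g = proj_index n a"
    and "g \<ge> 1"
    and "s < g"
    and "subspace_of_dim n s \<alpha>"
    and "\<alpha> \<subseteq> quadric n a"
  shows "graph_iso (quadric n a) (adj_s n a \<alpha>) (quadric n a) (qadj n a) \<longleftrightarrow> s = 0"
proof -
  note ns = assms(1) and sub = assms(5) and aq = assms(6)
  have pa: "proj_subspace n \<alpha>" and ca: "card \<alpha> = 2^(s+1) - 1"
    using sub by (auto simp: subspace_of_dim_def)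
  obtain M where M: "subspace_of_dim n g M" "M \<subseteq> quadric n a"
    using exists_M[OF sub aq] assms(2) by blast
  obtain x where "x \<in> typeX n a \<alpha>" using X_nonempty[OF sub aq M assms(4)] by blast
  then have Xne: "typeX n a \<alpha> \<noteq> {}" by blast
  show ?thesis
  proof (cases "s = 0")
    case True
    then have "card \<alpha> = 1" using ca by simp
    then obtain P where P: "\<alpha> = {P}" by (rule card_1_singletonE)
    then have "P \<in> quadric n a" using aq by simp
    then have "graph_iso (quadric n a) (adj_s n a \<alpha>) (quadric n a) (qadj n a)"
      using iso0 Xne P by blast
    then show ?thesis using True by simp
  next
    case False
    then have "(2::nat)^2 \<le> 2^(s+1)" by (intro power_increasing) auto
    then have c3: "3 \<le> card \<alpha>" using ca by simp
    have "\<not> graph_iso (quadric n a) (adj_s n a \<alpha>) (quadric n a) (qadj n a)"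
      using notPT[OF ns pa aq c3 Xne] PT_iso PT_quadric by blast
    then show ?thesis using False by simp
  qed
qed

end
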